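(* Let $A$ be a real $3\times3$ matrix whose eigenvalues are $\lambda_1$ (with algebraic multiplicity $2$) and $\lambda_2\neq\lambda_1$, and let $h>0$. If $\lambda_1=0$, set $\psi=1$, $\phi=h$, $\theta=\dfrac{e^{\lambda_2h}-\lambda_2h-1}{h^2\lambda_2^2}$. If $\lambda_1\neq0$, set $$\phi=\frac{(\lambda_2^2h-\lambda_1^2h+2\lambda_1)e^{\lambda_1h}-2\lambda_1e^{\lambda_2h}}{(\lambda_1-\lambda_2)^2},\qquad \psi=\frac{(2-\lambda_1h)e^{\lambda_1h}-\lambda_1\phi}{2},\qquad \theta=\frac{he^{\lambda_1h}-\phi}{2\lambda_1\phi^2}.$$ Then (whenever these expressions are defined) the explicit difference scheme $$\frac{\mathbf{x}_{k+1}-\psi\mathbf{x}_k}{\phi}=A\mathbf{x}_k+\theta\phi A^2\mathbf{x}_k$$ is exact for the system $\mathbf{x}'=A\mathbf{x}$.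
   Context: A one-step difference scheme with step size $h>0$ for $\mathbf{x}'=M\mathbf{x}$ is called exact if for every initial vector $\mathbf{x}_0$ the sequence $(\mathbf{x}_k)$ it generates satisfies $\mathbf{x}_k=\mathbf{x}(kh)$ for all $k\ge 0$, where $\mathbf{x}(t)$ solves $\mathbf{x}'=M\mathbf{x}$, $\mathbf{x}(0)=\mathbf{x}_0$. *)

theory Defs
  imports "HOL-Analysis.Analysis"
begin

definition charpoly3 :: "real^3^3 \<Rightarrow> real \<Rightarrow> real" where
  "charpoly3 A t = det (t *\<^sub>R mat 1 - A)"

definition eigen_double_simple :: "real^3^3 \<Rightarrow> real \<Rightarrow> real \<Rightarrow> bool" where
  "eigen_double_simple A l1 l2 \<longleftrightarrow> l1 \<noteq> l2 \<and>
     (\<forall>t. charpoly3 A t = (t - l1)^2 * (t - l2))"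

definition phi_c :: "real \<Rightarrow> real \<Rightarrow> real \<Rightarrow> real" where
  "phi_c l1 l2 h = (if l1 = 0 then h else
     ((l2^2 * h - l1^2 * h + 2 * l1) * exp (l1 * h) - 2 * l1 * exp (l2 * h)) / (l1 - l2)^2)"

definition psi_c :: "real \<Rightarrow> real \<Rightarrow> real \<Rightarrow> real" where
  "psi_c l1 l2 h = (if l1 = 0 then 1 else
     ((2 - l1 * h) * exp (l1 * h) - l1 * phi_c l1 l2 h) / 2)"

definition theta_c :: "real \<Rightarrow> real \<Rightarrow> real \<Rightarrow> real" where
  "theta_c l1 l2 h = (if l1 = 0 then (exp (l2 * h) - l2 * h - 1) / (h^2 * l2^2) else
     (h * exp (l1 * h) - phi_c l1 l2 h) / (2 * l1 * (phi_c l1 l2 h)^2))"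

text \<open>Exactness of a one-step scheme given as a relation R between consecutive
  iterates (R x_k x_{k+1}): every sequence generated by the scheme from x0
  agrees with the exact solution of x' = M x, x(0) = x0, at the grid points kh.\<close>
definition exact_scheme :: "real \<Rightarrow> ((real^'n) \<Rightarrow> (real^'n) \<Rightarrow> bool) \<Rightarrow> real^'n^'n \<Rightarrow> bool" where
  "exact_scheme h R M \<longleftrightarrow>
     (\<forall>(xs :: nat \<Rightarrow> real^'n) (x :: real \<Rightarrow> real^'n).
        (\<forall>k. R (xs k) (xs (Suc k))) \<and> x 0 = xs 0 \<and>
        (\<forall>t. (x has_vector_derivative (M *v x t)) (at t))
        \<longrightarrow> (\<forall>k. xs k = x (real k * h)))"

end

theory Submission
  imports Defs
begin

definition coA :: "real \<Rightarrow> real \<Rightarrow> real \<Rightarrow> real" where "coA l1 l2 s = exp (l1* s)"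
definition coB :: "real \<Rightarrow> real \<Rightarrow> real \<Rightarrow> real" where "coB l1 l2 s = s * exp (l1* s)"
definition coC :: "real \<Rightarrow> real \<Rightarrow> real \<Rightarrow> real" where
  "coC l1 l2 s = (exp (l2* s) - exp (l1* s) - s*(l2-l1)*exp (l1* s)) / (l2-l1)^2"

lemma dfa: "((\<lambda>s. coA l1 l2 (t1 - s)) has_real_derivative -(l1 * coA l1 l2 (t1 - s))) (at s)"
  unfolding coA_def by (auto intro!: derivative_eq_intros simp: algebra_simps)
lemma dfb: "((\<lambda>s. coB l1 l2 (t1 - s)) has_real_derivative -(coA l1 l2 (t1-s) + l1 * coB l1 l2 (t1 - s))) (at s)"
  unfolding coA_def coB_def by (auto intro!: derivative_eq_intros simp: algebra_simps)
lemma alg: fixes d p q Ea Eb u :: real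
  assumes "d \<noteq> 0" "q = p + d"
  shows "(-(q * Eb) + p * Ea + d * Ea + u * d * p * Ea) / d^2 = -(u * Ea + q * ((Eb - Ea - u * d * Ea) / d^2))"
  using assms by (simp add: field_simps power2_eq_square)

lemma dfc: assumes "l1 \<noteq> l2"
  shows "((\<lambda>s. coC l1 l2 (t1 - s)) has_real_derivative -(coB l1 l2 (t1-s) + l2 * coC l1 l2 (t1 - s))) (at s)"
proof -
  have ne: "l2 - l1 \<noteq> 0" using assms by simp
  have "((\<lambda>s. (exp (l2 * (t1 - s)) - exp (l1 * (t1 - s)) - (t1 - s)*(l2-l1)*exp (l1 * (t1 - s))) / (l2-l1)^2)
     has_real_derivative (-(l2 * exp (l2 * (t1 - s))) + l1 * exp (l1 * (t1 - s)) + (l2-l1)*exp (l1 * (t1 - s)) + (t1-s)*(l2-l1)*l1*exp (l1 * (t1 - s))) / (l2-l1)^2) (at s)"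
    by (rule DERIV_cdivide) (auto intro!: derivative_eq_intros simp: algebra_simps)
  moreover have "(-(l2 * exp (l2 * (t1 - s))) + l1 * exp (l1 * (t1 - s)) + (l2-l1)*exp (l1 * (t1 - s)) + (t1-s)*(l2-l1)*l1*exp (l1 * (t1 - s))) / (l2-l1)^2
    = -(coB l1 l2 (t1-s) + l2 * coC l1 l2 (t1 - s))"
    unfolding coB_def coC_def using alg[where d="l2-l1" and q=l2 and p=l1 and Eb="exp (l2 * (t1 - s))" and Ea="exp (l1 * (t1 - s))" and u="t1 - s"] ne by simp
  ultimately show ?thesis unfolding coC_def by simp
qed

lemma mvs: fixes A :: "real^3^3" shows "A *v (k *\<^sub>R v) = k *\<^sub>R (A *v v)"
  by (simp add: matrix_scaleR_vector_ac scaleR_matrix_vector_assoc)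

lemma flow:
  fixes A N :: "real^3^3" and x :: "real \<Rightarrow> real^3"
  assumes ne: "l1 \<noteq> l2"
    and Ndef: "N = A - l1 *\<^sub>R mat 1"
    and CH: "\<And>v. N *v (N *v (N *v v)) = (l2 - l1) *\<^sub>R (N *v (N *v v))"
    and sol: "\<And>t. (x has_vector_derivative (A *v x t)) (at t)"
  shows "x t1 = coA l1 l2 (t1 - t0) *\<^sub>R x t0 + coB l1 l2 (t1 - t0) *\<^sub>R (N *v x t0)
           + coC l1 l2 (t1 - t0) *\<^sub>R (N *v (N *v x t0))"
proof -
  have Ax: "\<And>v. A *v v = l1 *\<^sub>R v + N *v v"
    unfolding Ndef by (simp add: matrix_vector_mult_diff_rdistrib scaleR_matrix_vector_assoc[symmetric])
  define G where "G s = coA l1 l2 (t1 - s) *\<^sub>R x s + coB l1 l2 (t1 - s) *\<^sub>R (N *v x s)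
           + coC l1 l2 (t1 - s) *\<^sub>R (N *v (N *v x s))" for s
  have d1: "((\<lambda>s. N *v x s) has_vector_derivative (N *v (A *v x s))) (at s)" for s
    by (rule bounded_linear.has_vector_derivative[OF matrix_vector_mul_bounded_linear sol])
  have d2: "((\<lambda>s. N *v (N *v x s)) has_vector_derivative (N *v (N *v (A *v x s)))) (at s)" for s
    by (rule bounded_linear.has_vector_derivative[OF matrix_vector_mul_bounded_linear d1])
  have dG: "(G has_vector_derivative 0) (at s)" for s
  proof -
    have D: "(G has_vector_derivative
        (coA l1 l2 (t1 - s) *\<^sub>R (A *v x s) + (-(l1 * coA l1 l2 (t1 - s))) *\<^sub>R x s)
      + (coB l1 l2 (t1 - s) *\<^sub>R (N *v (A *v x s)) + (-(coA l1 l2 (t1-s) + l1 * coB l1 l2 (t1 - s))) *\<^sub>R (N *v x s))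
      + (coC l1 l2 (t1 - s) *\<^sub>R (N *v (N *v (A *v x s))) + (-(coB l1 l2 (t1-s) + l2 * coC l1 l2 (t1 - s))) *\<^sub>R (N *v (N *v x s))))
      (at s)"
      unfolding G_def
      by (intro has_vector_derivative_add has_vector_derivative_scaleR dfa dfb dfc[OF ne] sol d1 d2)
    have e1: "N *v (A *v x s) = l1 *\<^sub>R (N *v x s) + N *v (N *v x s)"
      by (simp add: Ax matrix_vector_right_distrib mvs)
    have e2: "N *v (N *v (A *v x s)) = l2 *\<^sub>R (N *v (N *v x s))"
      by (simp add: Ax matrix_vector_right_distrib mvs CH algebra_simps)
    show ?thesis using D unfolding e2 unfolding e1 by (simp add: Ax algebra_simps)
  qed
  obtain c where c: "\<And>s. s \<in> UNIV \<Longrightarrow> G s = c"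
    using has_vector_derivative_zero_constant[of UNIV G] dG by auto
  have "G t1 = G t0" using c by simp
  then show ?thesis unfolding G_def by (simp add: coA_def coB_def coC_def)
qed

lemma CH3:
  fixes A :: "real^3^3"
  assumes "\<forall>t. charpoly3 A t = (t - l1)^2 * (t - l2)"
  shows "A *v (A *v (A *v v)) - (2*l1+l2) *\<^sub>R (A *v (A *v v)) + (l1^2+2*l1*l2) *\<^sub>R (A *v v) - (l1^2*l2) *\<^sub>R v = 0"
proof -
  define T where "T = A$1$1+A$2$2+A$3$3"
  define M where "M = A$1$1*A$2$2 - A$1$2*A$2$1 + A$1$1*A$3$3 - A$1$3*A$3$1 + A$2$2*A$3$3 - A$2$3*A$3$2"
  have cp: "\<And>t. charpoly3 A t = t^3 - T*t^2 + M*t - det A"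
    unfolding charpoly3_def T_def M_def by (simp add: det_3 mat_def algebra_simps power3_eq_cube power2_eq_square)
  have e0: "det A = l1^2*l2" using assms cp[of 0] by simp
  have "1 - T + M - det A = (1-l1)^2*(1-l2)" using assms cp[of 1] by simp
  moreover have "-1 - T - M - det A = (-1-l1)^2*(-1-l2)" using assms cp[of "-1"] by simp
  ultimately have eT: "T = 2*l1+l2" and eM: "M = l1^2+2*l1*l2" using e0
    by (auto simp: algebra_simps power2_eq_square)
  have "A *v (A *v (A *v v)) - T *\<^sub>R (A *v (A *v v)) + M *\<^sub>R (A *v v) - det A *\<^sub>R v = 0"
    unfolding T_def M_def
    by (simp add: vec_eq_iff forall_3 det_3 matrix_vector_mult_def sum_3 algebra_simps)
  then show ?thesis using eT eM e0 by simp
qed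

lemma vtwo: fixes w :: "real^3" shows "w * 2 = (2::real) *\<^sub>R w"
  by (simp add: vec_eq_iff)

lemma vtwo2: fixes w :: "real^3" shows "2 * w = (2::real) *\<^sub>R w"
  by (simp add: vec_eq_iff)

lemma CHN:
  fixes A :: "real^3^3"
  assumes "\<forall>t. charpoly3 A t = (t - l1)^2 * (t - l2)"
  shows "(A - l1 *\<^sub>R mat 1) *v ((A - l1 *\<^sub>R mat 1) *v ((A - l1 *\<^sub>R mat 1) *v v))
     = (l2 - l1) *\<^sub>R ((A - l1 *\<^sub>R mat 1) *v ((A - l1 *\<^sub>R mat 1) *v v))"
proof -
  have nv: "\<And>w. (A - l1 *\<^sub>R mat 1) *v w = A *v w - l1 *\<^sub>R w"
    by (simp add: matrix_vector_mult_diff_rdistrib scaleR_matrix_vector_assoc[symmetric])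
  have c: "A *v (A *v (A *v v)) = (2*l1+l2) *\<^sub>R (A *v (A *v v)) - (l1^2+2*l1*l2) *\<^sub>R (A *v v) + (l1^2*l2) *\<^sub>R v"
    using CH3[OF assms, of v] by (simp add: algebra_simps)
  show ?thesis
    unfolding nv by (simp add: matrix_vector_right_distrib matrix_vector_mult_diff_distrib mvs c algebra_simps power2_eq_square vtwo)
qed


lemma alg2:
  fixes p q h Ea Eb :: real
  assumes "q - p \<noteq> 0" "p \<noteq> 0"
  shows "(h * Ea - ((q^2 * h - p^2 * h + 2 * p) * Ea - 2 * p * Eb) / (p - q)^2) / (2 * p)
     = (Eb - Ea - h * (q - p) * Ea) / (q - p)^2"
proof -
  have e: "(p - q)^2 = (q - p)^2" by (simp add: power2_commute)
  have nz: "(q - p)^2 \<noteq> 0" using assms by simp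
  show ?thesis unfolding e using nz assms(2)
    apply (simp add: field_simps)
    apply (simp add: power2_eq_square power4_eq_xxxx algebra_simps)
    done
qed

lemma coefs:
  assumes ne: "l1 \<noteq> l2" and h: "h > 0" and ph: "l1 \<noteq> 0 \<Longrightarrow> phi_c l1 l2 h \<noteq> 0"
  defines "c2 \<equiv> phi_c l1 l2 h * (theta_c l1 l2 h * phi_c l1 l2 h)"
  shows "c2 = coC l1 l2 h"
    and "phi_c l1 l2 h + 2 * c2 * l1 = coB l1 l2 h"
    and "psi_c l1 l2 h + phi_c l1 l2 h * l1 + c2 * l1^2 = coA l1 l2 h"
proof -
  have d: "l2 - l1 \<noteq> 0" using ne by simp
  show c: "c2 = coC l1 l2 h"
  proof (cases "l1 = 0")
    case True
    then have "l2 \<noteq> 0" using ne by simp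
    then show ?thesis using True h unfolding c2_def phi_c_def theta_c_def coC_def
      by (simp add: field_simps power2_eq_square)
  next
    case False
    have p: "phi_c l1 l2 h \<noteq> 0" using ph False by simp
    have "c2 = (h * exp (l1 * h) - phi_c l1 l2 h) / (2 * l1)"
      unfolding c2_def theta_c_def using False p by (simp add: field_simps power2_eq_square)
    also have "\<dots> = coC l1 l2 h"
      unfolding coC_def phi_c_def using False alg2[OF d False] by simp
    finally show ?thesis .
  qed
  show "phi_c l1 l2 h + 2 * c2 * l1 = coB l1 l2 h"
  proof (cases "l1 = 0")
    case True
    then show ?thesis unfolding phi_c_def coB_def by simp
  next
    case False
    have p: "phi_c l1 l2 h \<noteq> 0" using ph False by simp
    have "c2 = (h * exp (l1 * h) - phi_c l1 l2 h) / (2 * l1)"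
      unfolding c2_def theta_c_def using False p by (simp add: field_simps power2_eq_square)
    then show ?thesis unfolding coB_def using False by (simp add: field_simps)
  qed
  show "psi_c l1 l2 h + phi_c l1 l2 h * l1 + c2 * l1^2 = coA l1 l2 h"
  proof (cases "l1 = 0")
    case True
    then show ?thesis unfolding psi_c_def coA_def by simp
  next
    case False
    have p: "phi_c l1 l2 h \<noteq> 0" using ph False by simp
    have "c2 = (h * exp (l1 * h) - phi_c l1 l2 h) / (2 * l1)"
      unfolding c2_def theta_c_def using False p by (simp add: field_simps power2_eq_square)
    then show ?thesis unfolding coA_def psi_c_def using False
      by (simp add: field_simps power2_eq_square) (drule arg_cong[where f="\<lambda>z. l1*z"], simp add: algebra_simps)
  qed
qed


theorem mainTheorem13:
  fixes A :: "real^3^3" and l1 l2 h :: real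
  assumes "eigen_double_simple A l1 l2"
    and "h > 0"
    and "l1 \<noteq> 0 \<Longrightarrow> phi_c l1 l2 h \<noteq> 0"
  shows "exact_scheme h
           (\<lambda>xk xk1. (1 / phi_c l1 l2 h) *\<^sub>R (xk1 - psi_c l1 l2 h *\<^sub>R xk)
              = A *v xk + (theta_c l1 l2 h * phi_c l1 l2 h) *\<^sub>R ((A ** A) *v xk))
           A"
proof -
  have ne: "l1 \<noteq> l2" and cp: "\<forall>t. charpoly3 A t = (t - l1)^2 * (t - l2)"
    using assms(1) unfolding eigen_double_simple_def by auto
  define N where "N = A - l1 *\<^sub>R mat 1"
  have CH: "\<And>v. N *v (N *v (N *v v)) = (l2 - l1) *\<^sub>R (N *v (N *v v))"
    unfolding N_def by (rule CHN[OF cp])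
  have Ax: "\<And>v. A *v v = l1 *\<^sub>R v + N *v v"
    unfolding N_def by (simp add: matrix_vector_mult_diff_rdistrib scaleR_matrix_vector_assoc[symmetric])
  have pnz: "phi_c l1 l2 h \<noteq> 0"
    using assms(2,3) by (cases "l1 = 0") (auto simp: phi_c_def)
  define c2 where "c2 = phi_c l1 l2 h * (theta_c l1 l2 h * phi_c l1 l2 h)"
  note cf = coefs[OF ne assms(2,3), folded c2_def]
  have ca: "coA l1 l2 h = psi_c l1 l2 h + phi_c l1 l2 h * l1 + c2 * l1^2" using cf(3) by simp
  have cb: "coB l1 l2 h = phi_c l1 l2 h + 2 * c2 * l1" using cf(2) by simp
  have cc: "coC l1 l2 h = c2" using cf(1) by simp
  show ?thesis unfolding exact_scheme_def
  proof (intro allI impI)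
    fix xs :: "nat \<Rightarrow> real^3" and x :: "real \<Rightarrow> real^3" and k :: nat
    assume H: "(\<forall>k. (1 / phi_c l1 l2 h) *\<^sub>R (xs (Suc k) - psi_c l1 l2 h *\<^sub>R xs k)
              = A *v xs k + (theta_c l1 l2 h * phi_c l1 l2 h) *\<^sub>R ((A ** A) *v xs k)) \<and>
        x 0 = xs 0 \<and> (\<forall>t. (x has_vector_derivative (A *v x t)) (at t))"
    have sol: "\<And>t. (x has_vector_derivative (A *v x t)) (at t)" using H by blast
    have step: "xs (Suc k) = psi_c l1 l2 h *\<^sub>R xs k + phi_c l1 l2 h *\<^sub>R (A *v xs k)
        + c2 *\<^sub>R (A *v (A *v xs k))" for k
    proof -
      have "(1 / phi_c l1 l2 h) *\<^sub>R (xs (Suc k) - psi_c l1 l2 h *\<^sub>R xs k)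
              = A *v xs k + (theta_c l1 l2 h * phi_c l1 l2 h) *\<^sub>R ((A ** A) *v xs k)"
        using H by blast
      then have "phi_c l1 l2 h *\<^sub>R ((1 / phi_c l1 l2 h) *\<^sub>R (xs (Suc k) - psi_c l1 l2 h *\<^sub>R xs k))
         = phi_c l1 l2 h *\<^sub>R (A *v xs k + (theta_c l1 l2 h * phi_c l1 l2 h) *\<^sub>R ((A ** A) *v xs k))"
        by simp
      then have "xs (Suc k) - psi_c l1 l2 h *\<^sub>R xs k = phi_c l1 l2 h *\<^sub>R (A *v xs k)
          + c2 *\<^sub>R (A *v (A *v xs k))"
        using pnz by (simp add: c2_def scaleR_add_right matrix_vector_mul_assoc[symmetric])
      then show ?thesis by (simp add: algebra_simps)
    qed
    show "xs k = x (real k * h)"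
    proof (induction k)
      case 0
      then show ?case using H by simp
    next
      case (Suc k)
      have fl: "x (real k * h + h) = coA l1 l2 h *\<^sub>R x (real k * h) + coB l1 l2 h *\<^sub>R (N *v x (real k * h))
           + coC l1 l2 h *\<^sub>R (N *v (N *v x (real k * h)))"
        using flow[OF ne N_def CH sol, of "real k * h + h" "real k * h"] by simp
      have "xs (Suc k) = psi_c l1 l2 h *\<^sub>R xs k + phi_c l1 l2 h *\<^sub>R (A *v xs k)
        + c2 *\<^sub>R (A *v (A *v xs k))" by (rule step)
      also have "\<dots> = coA l1 l2 h *\<^sub>R xs k + coB l1 l2 h *\<^sub>R (N *v xs k)
           + coC l1 l2 h *\<^sub>R (N *v (N *v xs k))"
        unfolding ca cb cc
        by (simp add: Ax matrix_vector_right_distrib mvs algebra_simps power2_eq_square vtwo vtwo2)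
      also have "\<dots> = x (real (Suc k) * h)" using fl Suc by (simp add: algebra_simps)
      finally show ?case .
    qed
  qed
qed

end
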